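(* Let $\vec{\nu}$ be a finite sequence of ordinals $<\varepsilon(\Lambda)$ and let $\xi\le\zeta<\varepsilon(\Lambda)$. If $\vec{\nu}<\xi$, then $\vec{\nu}<\zeta$.
   Context: $\Lambda$ is a fixed epsilon number and $\varepsilon(\Lambda)$ the least epsilon number above it. Every $0<\xi<\varepsilon(\Lambda)$ is uniquely $\xi=\Lambda^{\xi_m}a_m+\cdots+\Lambda^{\xi_0}a_0$ with $\xi_m>\cdots>\xi_0$, $0<a_i<\Lambda$; $te(\xi)=\xi_0$ (and $te(0)=0$). $\zeta\le_{pt}\xi$ ($\zeta$ is a part of $\xi$) iff $\zeta=\Lambda^{\xi_m}a_m+\cdots+\Lambda^{\xi_n}a_n$ for some $0\le n\le m+1$ (the empty sum being $0$). For a finite sequence $\vec\nu=(\nu_0,\dots,\nu_l)$ of ordinals $<\varepsilon(\Lambda)$ and $\xi<\varepsilon(\Lambda)$, $\vec\nu<\xi$ means: there exist $n$ with $0\le n\le l$ such that $\nu_i=0$ for all $n<i\le l$, and ordinals $\mu_0,\dots,\mu_n$ with $\mu_0\le_{pt}\xi$, $\mu_{i+1}\le_{pt}te(\mu_i)$ for all $i<n$, and $\nu_i<\mu_i$ for all $i\le n$. *)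

theory Defs
  imports Main
begin

text \<open>
  Ordinals below \<open>\<epsilon>(\<Lambda>)\<close> are represented by their (hereditary) base-\<open>\<Lambda>\<close>
  Cantor normal forms
  \<open>\<Lambda>^\<xi>\<^sub>m a\<^sub>m + ... + \<Lambda>^\<xi>\<^sub>0 a\<^sub>0\<close>, as the list
  \<open>[(\<xi>\<^sub>m, a\<^sub>m), ..., (\<xi>\<^sub>0, a\<^sub>0)]\<close> (leading term first).
  The coefficient type \<open>'a\<close> stands for the well-ordered set of nonzero
  ordinals below \<open>\<Lambda>\<close> (the interval (0,\<Lambda>)), with its ordinal order.
\<close>

datatype 'a onf = NF "('a onf \<times> 'a) list"

fun terms :: "'a onf \<Rightarrow> ('a onf \<times> 'a) list" where
  "terms (NF xs) = xs"

definition ozero :: "'a onf" where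
  "ozero = NF []"

fun olt :: "'a::wellorder onf \<Rightarrow> 'a onf \<Rightarrow> bool"
and olt_list :: "('a::wellorder onf \<times> 'a) list \<Rightarrow> ('a onf \<times> 'a) list \<Rightarrow> bool" where
  "olt (NF xs) (NF ys) = olt_list xs ys"
| "olt_list [] ys = (ys \<noteq> [])"
| "olt_list (x # xs) [] = False"
| "olt_list ((e, a) # xs) ((f, b) # ys) =
     (olt e f \<or> (e = f \<and> (a < b \<or> (a = b \<and> olt_list xs ys))))"

definition ole :: "'a::wellorder onf \<Rightarrow> 'a onf \<Rightarrow> bool" where
  "ole x y \<longleftrightarrow> olt x y \<or> x = y"

fun wf_onf :: "'a::wellorder onf \<Rightarrow> bool" where
  "wf_onf (NF xs) =
     ((\<forall>p \<in> set xs. wf_onf (fst p)) \<and>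
      (\<forall>i. Suc i < length xs \<longrightarrow> olt (fst (xs ! Suc i)) (fst (xs ! i))))"

definition te :: "'a onf \<Rightarrow> 'a onf" where
  "te x = (if terms x = [] then ozero else fst (last (terms x)))"

definition part :: "'a onf \<Rightarrow> 'a onf \<Rightarrow> bool" where
  "part z x \<longleftrightarrow> (\<exists>n \<le> length (terms x). z = NF (take n (terms x)))"

definition vec_less :: "'a::wellorder onf list \<Rightarrow> 'a onf \<Rightarrow> bool" where
  "vec_less nus xi \<longleftrightarrow>
     (\<exists>n < length nus.
        (\<forall>i. n < i \<and> i < length nus \<longrightarrow> nus ! i = ozero) \<and>
        (\<exists>mu :: nat \<Rightarrow> 'a onf.
           part (mu 0) xi \<and>
           (\<forall>i < n. part (mu (Suc i)) (te (mu i))) \<and>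
           (\<forall>i \<le> n. olt (nus ! i) (mu i))))"

end

theory Submission imports Defs begin

lemma olt_list_trans:
  "(\<And>e f g. e \<in> fst ` set xs \<Longrightarrow> olt e f \<Longrightarrow> olt f g \<Longrightarrow> olt e g) \<Longrightarrow>
   olt_list xs ys \<Longrightarrow> olt_list ys zs \<Longrightarrow> olt_list xs zs"
proof (induction xs arbitrary: ys zs)
  case Nil
  then show ?case by (cases ys; cases zs) auto
next
  case (Cons p xs)
  obtain e a where p: "p = (e,a)" by force
  show ?case
  proof (cases ys)
    case Nil then show ?thesis using Cons by simp
  next
    case (Cons q ys')
    obtain f b where q: "q = (f,b)" by force
    show ?thesis
    proof (cases zs)
      case Nil then show ?thesis using Cons Cons.prems by simp
    next
      case (Cons r zs')
      obtain g c where r: "r = (g,c)" by force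
      have tr: "\<And>f g. olt e f \<Longrightarrow> olt f g \<Longrightarrow> olt e g" using Cons.prems(1) p by auto
      have IH: "\<And>ys zs. olt_list xs ys \<Longrightarrow> olt_list ys zs \<Longrightarrow> olt_list xs zs"
        using Cons.IH Cons.prems(1) by auto
      show ?thesis using Cons.prems(2,3) \<open>ys = q # ys'\<close> \<open>zs = r # zs'\<close> p q r tr IH
        by (auto dest: order.strict_trans)
    qed
  qed
qed

lemma olt_trans: "olt x y \<Longrightarrow> olt y z \<Longrightarrow> olt x z"
proof (induction x arbitrary: y z)
  case (NF xs)
  obtain ys where y: "y = NF ys" by (cases y) auto
  obtain zs where z: "z = NF zs" by (cases z) auto
  have "olt_list xs zs"
  proof (rule olt_list_trans[where ys=ys])
    fix e f g assume "e \<in> fst ` set xs" "olt e f" "olt f g"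
    then obtain p where "p \<in> set xs" "e \<in> Basic_BNFs.fsts p"
      by (force simp: fsts.simps)
    then show "olt e g" using NF.IH \<open>olt e f\<close> \<open>olt f g\<close> by blast
  qed (use NF.prems y z in auto)
  then show ?case using z by simp
qed

lemma ole_trans: "ole x y \<Longrightarrow> ole y z \<Longrightarrow> ole x z"
  unfolding ole_def using olt_trans by blast

lemma olt_ole_trans: "olt x y \<Longrightarrow> ole y z \<Longrightarrow> olt x z"
  unfolding ole_def using olt_trans by blast

definition R :: "('a::wellorder onf \<times> 'a) \<Rightarrow> ('a onf \<times> 'a) \<Rightarrow> bool" where
  "R p q \<longleftrightarrow> olt (fst q) (fst p)"

lemma transp_R: "transp R"
  unfolding transp_def R_def using olt_trans by blast

lemma wf_sorted: "wf_onf (NF xs) \<Longrightarrow> sorted_wrt R xs"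
  by (simp add: sorted_wrt_iff_nth_Suc_transp[OF transp_R] R_def)

lemma te_NF: "te (NF l) = (if l = [] then ozero else fst (last l))"
  by (simp add: te_def)

lemma last_take_le:
  assumes "sorted_wrt R ((e,a) # xs)" "0 < j"
  shows "ole (fst (last (take j ((e,a) # xs)))) e"
proof -
  obtain j' where j: "j = Suc j'" using assms(2) by (cases j) auto
  show ?thesis
  proof (cases "take j' xs = []")
    case True then show ?thesis using j by (simp add: ole_def)
  next
    case False
    then have "last (take j' xs) \<in> set xs"
      by (meson in_set_takeD last_in_set)
    then show ?thesis using assms(1) j False by (auto simp: R_def ole_def)
  qed
qed

lemma olt_list_Nil2: "\<not> olt_list l []"
  by (cases l) auto

lemma key_list:
  "olt_list xs ys \<Longrightarrow> sorted_wrt R xs \<Longrightarrow> j \<le> length xs \<Longrightarrow>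
   (\<exists>m\<le>length ys. take j xs = take m ys) \<or>
   (\<exists>m\<le>length ys. olt_list (take j xs) (take m ys) \<and>
        ole (te (NF (take j xs))) (te (NF (take m ys))))"
proof (induction xs arbitrary: ys j)
  case Nil
  then show ?case by auto
next
  case (Cons p xs)
  obtain e a where p: "p = (e,a)" by force
  obtain q ys' where ys: "ys = q # ys'" using Cons.prems(1) by (cases ys) auto
  obtain f b where q: "q = (f,b)" by force
  show ?case
  proof (cases j)
    case 0
    then show ?thesis by (intro disjI1 exI[of _ 0]) auto
  next
    case (Suc j')
    have le: "ole (te (NF (take j (p # xs)))) e"
      using last_take_le[of e a xs j] Cons.prems(2) p Suc by (simp add: te_NF)
    consider "olt e f" | "e = f" "a < b" | "e = f" "a = b" "olt_list xs ys'"
      using Cons.prems(1) p q ys by auto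
    then show ?thesis
    proof cases
      case 1
      have "olt (te (NF (take j (p # xs)))) f"
        using le 1 unfolding ole_def using olt_trans by blast
      then show ?thesis using 1 p q ys Suc
        by (intro disjI2 exI[of _ 1]) (auto simp: te_NF ole_def)
    next
      case 2
      then show ?thesis using le p q ys Suc
        by (intro disjI2 exI[of _ 1]) (auto simp: te_NF ole_def)
    next
      case 3
      show ?thesis
      proof (cases "j' = 0")
        case True
        then show ?thesis using 3 p q ys Suc by (intro disjI1 exI[of _ 1]) auto
      next
        case False
        have "sorted_wrt R xs" using Cons.prems(2) by simp
        from Cons.IH[OF 3(3) this, of j'] Cons.prems(3) Suc
        consider m where "m \<le> length ys'" "take j' xs = take m ys'"
          | m where "m \<le> length ys'" "olt_list (take j' xs) (take m ys')"
            "ole (te (NF (take j' xs))) (te (NF (take m ys')))" by auto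
        then show ?thesis
        proof cases
          case 1
          then show ?thesis using 3 p q ys Suc by (intro disjI1 exI[of _ "Suc m"]) auto
        next
          case 2
          have ne: "take j' xs \<noteq> []" using False Cons.prems(3) Suc by auto
          then have "take m ys' \<noteq> []" using 2(2) olt_list_Nil2 by metis
          then show ?thesis using 2 3 p q ys Suc ne by (intro disjI2 exI[of _ "Suc m"]) (auto simp: te_NF)
        qed
      qed
    qed
  qed
qed

lemma key:
  assumes "wf_onf x" "olt x z" "part p x"
  shows "part p z \<or> (\<exists>q. part q z \<and> olt p q \<and> ole (te p) (te q))"
proof -
  obtain xs where x: "x = NF xs" by (cases x) auto
  obtain zs where z: "z = NF zs" by (cases z) auto
  obtain j where j: "j \<le> length xs" "p = NF (take j xs)" using assms(3) x by (auto simp: part_def)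
  from key_list[of xs zs j] assms x z j wf_sorted[of xs]
  show ?thesis unfolding part_def by auto
qed

lemma wf_te_part:
  assumes "wf_onf x" "part p x" shows "wf_onf (te p)"
proof -
  obtain xs where x: "x = NF xs" by (cases x) auto
  obtain j where j: "j \<le> length xs" "p = NF (take j xs)" using assms(2) x by (auto simp: part_def)
  show ?thesis
  proof (cases "take j xs = []")
    case True then show ?thesis using j by (simp add: te_NF ozero_def)
  next
    case False
    then have "last (take j xs) \<in> set xs" by (meson in_set_takeD last_in_set)
    then show ?thesis using assms(1) x j False by (auto simp: te_NF)
  qed
qed

lemma chain:
  "wf_onf x \<Longrightarrow> wf_onf z \<Longrightarrow> ole x z \<Longrightarrow> part (mu 0) x \<Longrightarrow>
   (\<forall>i<n. part (mu (Suc i)) (te (mu i))) \<Longrightarrow> (\<forall>i\<le>n. olt (g i) (mu i)) \<Longrightarrow>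
   \<exists>mu'. part (mu' 0) z \<and> (\<forall>i<n. part (mu' (Suc i)) (te (mu' i))) \<and> (\<forall>i\<le>n. olt (g i) (mu' i))"
proof (induction n arbitrary: x z mu g)
  case 0
  show ?case
  proof (cases "part (mu 0) z")
    case True then show ?thesis using 0 by blast
  next
    case False
    then have "olt x z" using 0 by (auto simp: ole_def)
    then obtain q where "part q z" "olt (mu 0) q" using key[OF 0(1) _ 0(4)] False by blast
    then show ?thesis using 0(6) olt_trans by (intro exI[of _ "\<lambda>_. q"]) auto
  qed
next
  case (Suc n)
  show ?case
  proof (cases "part (mu 0) z")
    case True then show ?thesis using Suc.prems by blast
  next
    case False
    then have "olt x z" using Suc.prems by (auto simp: ole_def)
    then obtain q where q: "part q z" "olt (mu 0) q" "ole (te (mu 0)) (te q)"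
      using key[OF Suc.prems(1) _ Suc.prems(4)] False by blast
    have w1: "wf_onf (te (mu 0))" using wf_te_part Suc.prems by blast
    have w2: "wf_onf (te q)" using wf_te_part Suc.prems q by blast
    obtain mu'' where m: "part (mu'' 0) (te q)" "\<forall>i<n. part (mu'' (Suc i)) (te (mu'' i))"
        "\<forall>i\<le>n. olt (g (Suc i)) (mu'' i)"
      using Suc.IH[OF w1 w2 q(3), of "mu \<circ> Suc" "g \<circ> Suc"] Suc.prems by auto
    define mu' where "mu' = case_nat q mu''"
    have "part (mu' 0) z" using q mu'_def by simp
    moreover have "\<forall>i<Suc n. part (mu' (Suc i)) (te (mu' i))"
    proof (intro allI impI)
      fix i assume "i < Suc n"
      then show "part (mu' (Suc i)) (te (mu' i))" using m mu'_def
        by (cases i) auto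
    qed
    moreover have "\<forall>i\<le>Suc n. olt (g i) (mu' i)"
    proof (intro allI impI)
      fix i assume "i \<le> Suc n"
      have "olt (g 0) (mu 0)" using Suc.prems(6) by auto
      then have "olt (g 0) q" using q(2) olt_trans by blast
      then show "olt (g i) (mu' i)" using m mu'_def \<open>i \<le> Suc n\<close>
        by (cases i) auto
    qed
    ultimately show ?thesis by blast
  qed
qed

theorem proposition2p3:
  fixes nus :: "'a::wellorder onf list" and xi zeta :: "'a onf"
  assumes "nus \<noteq> []"
    and "\<forall>nu \<in> set nus. wf_onf nu"
    and "wf_onf xi" and "wf_onf zeta"
    and "ole xi zeta"
    and "vec_less nus xi"
  shows "vec_less nus zeta"
proof -
  from assms(6) obtain n mu where n: "n < length nus"
    "\<forall>i. n < i \<and> i < length nus \<longrightarrow> nus ! i = ozero"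
    "part (mu 0) xi" "\<forall>i<n. part (mu (Suc i)) (te (mu i))" "\<forall>i\<le>n. olt (nus ! i) (mu i)"
    unfolding vec_less_def by blast
  from chain[OF assms(3,4,5) n(3,4), of "\<lambda>i. nus ! i"] n(5)
  obtain mu' where "part (mu' 0) zeta" "\<forall>i<n. part (mu' (Suc i)) (te (mu' i))"
    "\<forall>i\<le>n. olt (nus ! i) (mu' i)" by blast
  then show ?thesis unfolding vec_less_def using n(1,2) by blast
qed

end
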